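(* The only solution $(m,p,q,x)$ in positive integers, with $p$ and $q$ odd primes, of the equation $$x^2+q^{2m}=2\cdot 17^p$$ is $(m,p,q,x)=(1,3,5,99)$. *)

theory Defs
  imports Main "HOL-Computational_Algebra.Primes"
begin

end

theory Submission
  imports Defs
begin

datatype gi = G (gre: int) (gim: int)

lemma gi_eq_iff: "z = w \<longleftrightarrow> gre z = gre w \<and> gim z = gim w"
  by (cases z; cases w) auto

instantiation gi :: comm_ring_1
begin
definition "0 = G 0 0"
definition "1 = G 1 0"
definition "z + w = G (gre z + gre w) (gim z + gim w)"
definition "z - w = G (gre z - gre w) (gim z - gim w)"
definition "- z = G (- gre z) (- gim z)"
definition "z * w = G (gre z * gre w - gim z * gim w) (gre z * gim w + gim z * gre w)"
instance
  by standard (auto simp: gi_eq_iff zero_gi_def one_gi_def plus_gi_def minus_gi_def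
        uminus_gi_def times_gi_def algebra_simps)
end

lemma gre_simps[simp]: "gre 0 = 0" "gre 1 = 1" "gre (z+w) = gre z + gre w"
  "gre (z - w) = gre z - gre w" "gre (-z) = - gre z"
  "gre (z*w) = gre z * gre w - gim z * gim w"
  and gim_simps[simp]: "gim 0 = 0" "gim 1 = 0" "gim (z+w) = gim z + gim w"
  "gim (z - w) = gim z - gim w" "gim (-z) = - gim z"
  "gim (z*w) = gre z * gim w + gim z * gre w"
  by (simp_all add: zero_gi_def one_gi_def plus_gi_def minus_gi_def
        uminus_gi_def times_gi_def)

lemma G_mult: "G a b * G c d = G (a*c - b*d) (a*d + b*c)"
  by (simp add: gi_eq_iff)
lemma G_one: "1 = G 1 0" by (simp add: gi_eq_iff)
lemma "(G 4 1)^7 = G (-2908) 20047"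
  by (simp add: G_mult eval_nat_numeral)
lemma "(G 4 1)^23 = G 112605054449252 (-85367854683953)"
  by (simp add: G_mult eval_nat_numeral)



abbreviation al :: gi where "al \<equiv> G 4 1"
abbreviation be :: gi where "be \<equiv> G 4 (-1)"

definition gnorm :: "gi \<Rightarrow> int" where "gnorm z = gre z ^ 2 + gim z ^ 2"
definition cnj :: "gi \<Rightarrow> gi" where "cnj z = G (gre z) (- gim z)"

lemma gnorm_mult: "gnorm (z * w) = gnorm z * gnorm w"
  by (simp add: gnorm_def power2_eq_square algebra_simps)

lemma cnj_mult: "cnj (z * w) = cnj z * cnj w"
  by (simp add: cnj_def gi_eq_iff)

lemma cnj_pow: "cnj (z ^ n) = cnj z ^ n"
proof (induction n)
  case 0
  then show ?case by (simp add: cnj_def gi_eq_iff)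
next
  case (Suc n)
  then show ?case by (simp add: cnj_mult)
qed

lemma cnj_al: "cnj al = be" by (simp add: cnj_def)

lemma descent:
  assumes "17 dvd gnorm z" "\<not> (17 dvd gre z \<and> 17 dvd gim z)"
  shows "(\<exists>z'. z = al * z') \<or> (\<exists>z'. z = be * z')"
proof -
  define a where "a = gre z"
  define b where "b = gim z"
  have "(4*a+b)*(4*a-b) = 17 * a^2 - gnorm z"
    by (simp add: a_def b_def gnorm_def power2_eq_square algebra_simps)
  hence "(17::int) dvd (4*a+b)*(4*a-b)" using assms(1) by simp
  hence "17 dvd (4*a+b) \<or> (17::int) dvd (4*a-b)"
    by (simp add: prime_dvd_mult_iff)
  thus ?thesis
  proof
    assume "17 dvd (4*a+b)"
    then obtain k where k: "4*a+b = 17*k" by blast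
    have "z = al * G k (4*k - a)"
      using k by (simp add: gi_eq_iff a_def b_def)
    thus ?thesis by blast
  next
    assume "17 dvd (4*a-b)"
    then obtain k where k: "4*a-b = 17*k" by blast
    have "z = be * G k (a - 4*k)"
      using k by (simp add: gi_eq_iff a_def b_def)
    thus ?thesis by blast
  qed
qed

lemma G17: "G 17 0 * u = G (17 * gre u) (17 * gim u)"
  by (simp add: gi_eq_iff)

lemma gstruct:
  "gnorm z = 2 * 17^n \<Longrightarrow> \<not> (17 dvd gre z \<and> 17 dvd gim z) \<Longrightarrow>
   \<exists>w. gnorm w = 2 \<and> (z = w * al^n \<or> z = w * be^n)"
proof (induction n arbitrary: z)
  case 0
  then show ?case by auto
next
  case (Suc n)
  have "17 dvd gnorm z" using Suc.prems(1) by simp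
  from descent[OF this Suc.prems(2)]
  show ?case
  proof
    assume "\<exists>z'. z = al * z'"
    then obtain z' where z': "z = al * z'" by blast
    have "gnorm al = 17" by (simp add: gnorm_def)
    moreover have "gnorm z = gnorm al * gnorm z'" using z' by (simp add: gnorm_mult)
    ultimately have "gnorm z = 17 * gnorm z'" by simp
    hence n1: "gnorm z' = 2 * 17^n" using Suc.prems(1) by simp
    have n2: "\<not> (17 dvd gre z' \<and> 17 dvd gim z')"
      using Suc.prems(2) z' by auto
    from Suc.IH[OF n1 n2] obtain w where w: "gnorm w = 2" "z' = w * al^n \<or> z' = w * be^n"
      by blast
    from w(2) show ?case
    proof
      assume "z' = w * al^n"
      hence "z = w * al^Suc n" using z' by (simp add: algebra_simps)
      thus ?case using w(1) by blast
    next
      assume h: "z' = w * be^n"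
      show ?case
      proof (cases n)
        case 0
        thus ?thesis using h z' w(1) by (auto simp: mult.commute)
      next
        case (Suc n')
        have e: "al * be = G 17 0" by (simp add: G_mult)
        have "z = w * (al * be) * be^n'" using h z' Suc by (simp add: mult_ac)
        hence "z = G 17 0 * (w * be^n')" by (simp only: e mult_ac)
        hence False using Suc.prems(2) by (simp add: G17)
        thus ?thesis ..
      qed
    qed
  next
    assume "\<exists>z'. z = be * z'"
    then obtain z' where z': "z = be * z'" by blast
    have "gnorm be = 17" by (simp add: gnorm_def)
    moreover have "gnorm z = gnorm be * gnorm z'" using z' by (simp add: gnorm_mult)
    ultimately have "gnorm z = 17 * gnorm z'" by simp
    hence n1: "gnorm z' = 2 * 17^n" using Suc.prems(1) by simp
    have n2: "\<not> (17 dvd gre z' \<and> 17 dvd gim z')"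
      using Suc.prems(2) z' by auto
    from Suc.IH[OF n1 n2] obtain w where w: "gnorm w = 2" "z' = w * al^n \<or> z' = w * be^n"
      by blast
    from w(2) show ?case
    proof
      assume "z' = w * be^n"
      hence "z = w * be^Suc n" using z' by (simp add: algebra_simps)
      thus ?case using w(1) by blast
    next
      assume h: "z' = w * al^n"
      show ?case
      proof (cases n)
        case 0
        thus ?thesis using h z' w(1) by (auto simp: mult.commute)
      next
        case (Suc n')
        have e: "al * be = G 17 0" by (simp add: G_mult)
        have "z = w * (be * al) * al^n'" using h z' Suc by (simp add: mult_ac)
        hence "z = G 17 0 * (w * al^n')" by (simp only: e mult_ac)
        hence False using Suc.prems(2) by (simp add: G17)
        thus ?thesis ..
      qed
    qed
  qed
qed

lemma sq_lt2: assumes "(a::int)^2 \<le> 2" shows "\<bar>a\<bar> < 2"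
proof (rule ccontr)
  assume "\<not> \<bar>a\<bar> < 2"
  hence "2 \<le> \<bar>a\<bar>" by simp
  hence "2^2 \<le> \<bar>a\<bar>^2" by (rule power_mono) simp
  thus False using assms by simp
qed

lemma norm2: assumes "a^2 + b^2 = (2::int)" shows "(a = 1 \<or> a = -1) \<and> (b = 1 \<or> b = -1)"
proof -
  have "0 \<le> a^2" "0 \<le> b^2" by simp_all
  hence "a^2 \<le> 2" "b^2 \<le> 2" using assms by linarith+
  hence "\<bar>a\<bar> < 2" "\<bar>b\<bar> < 2" by (simp_all add: sq_lt2)
  hence "a \<in> {-1,0,1}" "b \<in> {-1,0,1}" by auto
  thus ?thesis using assms by auto
qed


lemma corC:
  fixes x y :: int
  assumes "x > 0" "y > 0" "x^2 + y^2 = 2*17^n" "\<not>(17 dvd x \<and> 17 dvd y)"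
  shows "(x = \<bar>gre (al^n) - gim (al^n)\<bar> \<and> y = \<bar>gre (al^n) + gim (al^n)\<bar>) \<or>
         (x = \<bar>gre (al^n) + gim (al^n)\<bar> \<and> y = \<bar>gre (al^n) - gim (al^n)\<bar>)"
proof -
  obtain w where w: "gnorm w = 2" "G x y = w*al^n \<or> G x y = w*be^n"
    using gstruct[of "G x y" n] assms by (auto simp: gnorm_def)
  define A where "A = gre (al^n)"
  define B where "B = gim (al^n)"
  have aln: "al^n = G A B" by (simp add: A_def B_def gi_eq_iff)
  have "be^n = cnj (al^n)" by (simp add: cnj_pow cnj_al)
  hence ben: "be^n = G A (-B)" by (simp add: A_def B_def cnj_def)
  have ef: "(gre w = 1 \<or> gre w = -1) \<and> (gim w = 1 \<or> gim w = -1)"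
    using w(1) norm2 by (simp add: gnorm_def)
  from w(2) have "(x = gre w * A - gim w * B \<and> y = gre w * B + gim w * A) \<or>
     (x = gre w * A + gim w * B \<and> y = - gre w * B + gim w * A)"
    by (auto simp: aln ben gi_eq_iff)
  thus ?thesis using ef assms(1,2) unfolding A_def[symmetric] B_def[symmetric]
    by (elim disjE conjE; simp; arith)
qed

definition gcong :: "int \<Rightarrow> gi \<Rightarrow> gi \<Rightarrow> bool" where
  "gcong M z w \<longleftrightarrow> (\<exists>k. z = w + G M 0 * k)"

lemma gcong_iff: "gcong M z w \<longleftrightarrow> M dvd gre z - gre w \<and> M dvd gim z - gim w"
proof
  assume "gcong M z w"
  then obtain k where "z = w + G M 0 * k" by (auto simp: gcong_def)
  thus "M dvd gre z - gre w \<and> M dvd gim z - gim w" by simp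
next
  assume "M dvd gre z - gre w \<and> M dvd gim z - gim w"
  then obtain k1 k2 where "gre z - gre w = M * k1" "gim z - gim w = M * k2"
    by (auto elim!: dvdE)
  hence "z = w + G M 0 * G k1 k2" by (simp add: gi_eq_iff)
  thus "gcong M z w" by (auto simp: gcong_def)
qed

lemma gcong_refl: "gcong M z z"
  unfolding gcong_def by (rule exI[of _ 0]) simp

lemma gcong_mult: "gcong M a b \<Longrightarrow> gcong M c d \<Longrightarrow> gcong M (a*c) (b*d)"
proof -
  assume "gcong M a b" "gcong M c d"
  then obtain k l where "a = b + G M 0 * k" "c = d + G M 0 * l" by (auto simp: gcong_def)
  hence "a * c = b * d + G M 0 * (k * d + b * l + G M 0 * k * l)"
    by (simp add: algebra_simps)
  thus ?thesis by (auto simp: gcong_def)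
qed

lemma gcong_pow: "gcong M a b \<Longrightarrow> gcong M (a^n) (b^n)"
proof (induction n)
  case 0
  then show ?case by (simp add: gcong_refl)
next
  case (Suc n)
  then show ?case using gcong_mult[OF \<open>gcong M a b\<close> Suc.IH] by simp
qed

lemma gcong_period: assumes "gcong M (al^P) 1" shows "gcong M (al^n) (al^(n mod P))"
proof -
  have "al^n = al^(P * (n div P) + n mod P)" by simp
  also have "\<dots> = (al^P)^(n div P) * al^(n mod P)"
    by (simp only: power_add power_mult)
  finally have e: "al^n = (al^P)^(n div P) * al^(n mod P)" .
  have "gcong M ((al^P)^(n div P)) (1^(n div P))"
    by (rule gcong_pow[OF assms])
  hence "gcong M ((al^P)^(n div P) * al^(n mod P)) (1^(n div P) * al^(n mod P))"
    by (rule gcong_mult[OF _ gcong_refl])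
  thus ?thesis by (simp only: e power_one mult_1_left)
qed

lemma resid: assumes "gcong M (al^P) 1" "n mod P = r"
  shows "gre (al^n) mod M = gre (al^r) mod M \<and> gim (al^n) mod M = gim (al^r) mod M"
proof -
  have "gcong M (al^n) (al^r)" using gcong_period[OF assms(1), of n] assms(2) by simp
  thus ?thesis unfolding gcong_iff by (simp add: mod_eq_dvd_iff)
qed

lemma alp1: "al^1 = G 4 1"
  by (simp add: G_mult eval_nat_numeral)
lemma alp2: "al^2 = G 15 8"
  by (simp add: G_mult eval_nat_numeral)
lemma alp3: "al^3 = G 52 47"
  by (simp add: G_mult eval_nat_numeral)
lemma alp4: "al^4 = G 161 240"
  by (simp add: G_mult eval_nat_numeral)
lemma alp5: "al^5 = G 404 1121"
  by (simp add: G_mult eval_nat_numeral)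
lemma alp6: "al^6 = G 495 4888"
  by (simp add: G_mult eval_nat_numeral)
lemma alp7: "al^7 = G (-2908) 20047"
  by (simp add: G_mult eval_nat_numeral)
lemma alp8: "al^8 = G (-31679) 77280"
  by (simp add: G_mult eval_nat_numeral)
lemma alp9: "al^9 = G (-203996) 277441"
  by (simp add: G_mult eval_nat_numeral)
lemma alp10: "al^10 = G (-1093425) 905768"
  by (simp add: G_mult eval_nat_numeral)
lemma alp11: "al^11 = G (-5279468) 2529647"
  by (simp add: G_mult eval_nat_numeral)
lemma alp12: "al^12 = G (-23647519) 4839120"
  by (simp add: G_mult eval_nat_numeral)
lemma alp13: "al^13 = G (-99429196) (-4291039)"
  by (simp add: G_mult eval_nat_numeral)
lemma alp14: "al^14 = G (-393425745) (-116593352)"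
  by (simp add: G_mult eval_nat_numeral)
lemma alp15: "al^15 = G (-1457109628) (-859799153)"
  by (simp add: G_mult eval_nat_numeral)
lemma alp16: "al^16 = G (-4968639359) (-4896306240)"
  by (simp add: G_mult eval_nat_numeral)
lemma alp17: "al^17 = G (-14978251196) (-24553864319)"
  by (simp add: G_mult eval_nat_numeral)
lemma alp18: "al^18 = G (-35359140465) (-113193708472)"
  by (simp add: G_mult eval_nat_numeral)
lemma alp19: "al^19 = G (-28242853388) (-488133974353)"
  by (simp add: G_mult eval_nat_numeral)
lemma alp20: "al^20 = G 375162560801 (-1980778750800)"
  by (simp add: G_mult eval_nat_numeral)
lemma alp21: "al^21 = G 3481428994004 (-7547952442399)"
  by (simp add: G_mult eval_nat_numeral)
lemma alp22: "al^22 = G 21473668418415 (-26710380775592)"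
  by (simp add: G_mult eval_nat_numeral)
lemma alp23: "al^23 = G 112605054449252 (-85367854683953)"
  by (simp add: G_mult eval_nat_numeral)

lemma al8: "gcong 15 (al^8) 1"
  by (simp add: gcong_iff G_mult eval_nat_numeral G_one)
lemma al20: "gcong 25 (al^20) 1"
  by (simp add: gcong_iff G_mult eval_nat_numeral G_one)
lemma al24: "gcong 9 (al^24) 1"
  by (simp add: gcong_iff G_mult eval_nat_numeral G_one)

lemma modcase:
  fixes A B a b M d :: int
  assumes "A mod M = a" "B mod M = b" "d dvd M"
  shows "(d dvd A + B \<longleftrightarrow> d dvd a + b) \<and> (d dvd A - B \<longleftrightarrow> d dvd a - b)"
proof -
  have "M dvd A - a" "M dvd B - b" using assms(1,2) by (metis dvd_minus_mod)+
  hence 1: "d dvd A - a" "d dvd B - b" using assms(3) dvd_trans by blast+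
  have "A + B = (a + b) + ((A - a) + (B - b))" "A - B = (a - b) + ((A - a) - (B - b))" by simp_all
  thus ?thesis using 1 by (metis dvd_add_left_iff dvd_diff)
qed

lemma modsum:
  fixes A B a b M d :: int
  assumes "A mod M = a" "B mod M = b" "d dvd M"
  shows "(A + B) mod d = (a + b) mod d"
proof -
  have "M dvd A - a" "M dvd B - b" using assms(1,2) by (metis dvd_minus_mod)+
  hence "d dvd A - a" "d dvd B - b" using assms(3) dvd_trans by blast+
  hence "d dvd (A + B) - (a + b)" using dvd_add[of d "A - a" "B - b"] by (simp add: algebra_simps)
  thus ?thesis by (simp add: mod_eq_dvd_iff)
qed

lemma mod15:
  assumes "odd n"
  shows "(3 dvd gre (al^n) - gim (al^n) \<and> 5 dvd gre (al^n) + gim (al^n)) \<or>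
         (3 dvd gre (al^n) + gim (al^n) \<and> 5 dvd gre (al^n) - gim (al^n))"
proof -
  define A where "A = gre (al^n)"
  define B where "B = gim (al^n)"
  have key: "\<And>r. n mod 8 = r \<Longrightarrow> A mod 15 = gre (al^r) mod 15 \<and> B mod 15 = gim (al^r) mod 15"
    using resid[OF al8] by (simp add: A_def B_def)
  have "n mod 8 = 1 \<or> n mod 8 = 3 \<or> n mod 8 = 5 \<or> n mod 8 = 7" using assms by presburger
  moreover have "n mod 8 = 1 \<Longrightarrow> A mod 15 = 4 \<and> B mod 15 = 1"
    using key[of 1] by (simp add: alp1)
  moreover have "n mod 8 = 3 \<Longrightarrow> A mod 15 = 7 \<and> B mod 15 = 2"
    using key[of 3] by (simp add: alp3)
  moreover have "n mod 8 = 5 \<Longrightarrow> A mod 15 = 14 \<and> B mod 15 = 11"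
    using key[of 5] by (simp add: alp5)
  moreover have "n mod 8 = 7 \<Longrightarrow> A mod 15 = 2 \<and> B mod 15 = 7"
    using key[of 7] by (simp add: alp7)
  ultimately have "(3 dvd A - B \<and> 5 dvd A + B) \<or> (3 dvd A + B \<and> 5 dvd A - B)"
    using modcase[of A 15 _ B _ 3] modcase[of A 15 _ B _ 5] by auto
  thus ?thesis by (simp add: A_def B_def)
qed

lemma mod5:
  assumes "n mod 4 = 3"
  shows "(gre (al^n) + gim (al^n)) mod 5 = 4"
proof -
  define A where "A = gre (al^n)"
  define B where "B = gim (al^n)"
  have key: "\<And>r. n mod 8 = r \<Longrightarrow> A mod 15 = gre (al^r) mod 15 \<and> B mod 15 = gim (al^r) mod 15"
    using resid[OF al8] by (simp add: A_def B_def)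
  have "n mod 8 = 3 \<or> n mod 8 = 7" using assms by presburger
  moreover have "n mod 8 = 3 \<Longrightarrow> A mod 15 = 7 \<and> B mod 15 = 2"
    using key[of 3] by (simp add: alp3)
  moreover have "n mod 8 = 7 \<Longrightarrow> A mod 15 = 2 \<and> B mod 15 = 7"
    using key[of 7] by (simp add: alp7)
  ultimately have "(A + B) mod 5 = 4"
    using modsum[of A 15 _ B _ 5] by auto
  thus ?thesis by (simp add: A_def B_def)
qed

lemma mod25:
  assumes "odd n" "\<not> 5 dvd n"
  shows "\<not> 25 dvd gre (al^n) + gim (al^n) \<and> \<not> 25 dvd gre (al^n) - gim (al^n)"
proof -
  define A where "A = gre (al^n)"
  define B where "B = gim (al^n)"
  have key: "\<And>r. n mod 20 = r \<Longrightarrow> A mod 25 = gre (al^r) mod 25 \<and> B mod 25 = gim (al^r) mod 25"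
    using resid[OF al20] by (simp add: A_def B_def)
  have "n mod 20 = 1 \<or> n mod 20 = 3 \<or> n mod 20 = 7 \<or> n mod 20 = 9 \<or> n mod 20 = 11 \<or> n mod 20 = 13 \<or> n mod 20 = 17 \<or> n mod 20 = 19" using assms by presburger
  moreover have "n mod 20 = 1 \<Longrightarrow> A mod 25 = 4 \<and> B mod 25 = 1"
    using key[of 1] by (simp add: alp1)
  moreover have "n mod 20 = 3 \<Longrightarrow> A mod 25 = 2 \<and> B mod 25 = 22"
    using key[of 3] by (simp add: alp3)
  moreover have "n mod 20 = 7 \<Longrightarrow> A mod 25 = 17 \<and> B mod 25 = 22"
    using key[of 7] by (simp add: alp7)
  moreover have "n mod 20 = 9 \<Longrightarrow> A mod 25 = 4 \<and> B mod 25 = 16"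
    using key[of 9] by (simp add: alp9)
  moreover have "n mod 20 = 11 \<Longrightarrow> A mod 25 = 7 \<and> B mod 25 = 22"
    using key[of 11] by (simp add: alp11)
  moreover have "n mod 20 = 13 \<Longrightarrow> A mod 25 = 4 \<and> B mod 25 = 11"
    using key[of 13] by (simp add: alp13)
  moreover have "n mod 20 = 17 \<Longrightarrow> A mod 25 = 4 \<and> B mod 25 = 6"
    using key[of 17] by (simp add: alp17)
  moreover have "n mod 20 = 19 \<Longrightarrow> A mod 25 = 12 \<and> B mod 25 = 22"
    using key[of 19] by (simp add: alp19)
  ultimately have "\<not> 25 dvd A + B \<and> \<not> 25 dvd A - B"
    using modcase[of A 25 _ B _ 25] by auto
  thus ?thesis by (simp add: A_def B_def)
qed

lemma mod9:
  assumes "odd n" "\<not> 3 dvd n"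
  shows "\<not> 9 dvd gre (al^n) + gim (al^n) \<and> \<not> 9 dvd gre (al^n) - gim (al^n)"
proof -
  define A where "A = gre (al^n)"
  define B where "B = gim (al^n)"
  have key: "\<And>r. n mod 24 = r \<Longrightarrow> A mod 9 = gre (al^r) mod 9 \<and> B mod 9 = gim (al^r) mod 9"
    using resid[OF al24] by (simp add: A_def B_def)
  have "n mod 24 = 1 \<or> n mod 24 = 5 \<or> n mod 24 = 7 \<or> n mod 24 = 11 \<or> n mod 24 = 13 \<or> n mod 24 = 17 \<or> n mod 24 = 19 \<or> n mod 24 = 23" using assms by presburger
  moreover have "n mod 24 = 1 \<Longrightarrow> A mod 9 = 4 \<and> B mod 9 = 1"
    using key[of 1] by (simp add: alp1)
  moreover have "n mod 24 = 5 \<Longrightarrow> A mod 9 = 8 \<and> B mod 9 = 5"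
    using key[of 5] by (simp add: alp5)
  moreover have "n mod 24 = 7 \<Longrightarrow> A mod 9 = 8 \<and> B mod 9 = 4"
    using key[of 7] by (simp add: alp7)
  moreover have "n mod 24 = 11 \<Longrightarrow> A mod 9 = 4 \<and> B mod 9 = 8"
    using key[of 11] by (simp add: alp11)
  moreover have "n mod 24 = 13 \<Longrightarrow> A mod 9 = 5 \<and> B mod 9 = 8"
    using key[of 13] by (simp add: alp13)
  moreover have "n mod 24 = 17 \<Longrightarrow> A mod 9 = 1 \<and> B mod 9 = 4"
    using key[of 17] by (simp add: alp17)
  moreover have "n mod 24 = 19 \<Longrightarrow> A mod 9 = 1 \<and> B mod 9 = 5"
    using key[of 19] by (simp add: alp19)
  moreover have "n mod 24 = 23 \<Longrightarrow> A mod 9 = 5 \<and> B mod 9 = 1"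
    using key[of 23] by (simp add: alp23)
  ultimately have "\<not> 9 dvd A + B \<and> \<not> 9 dvd A - B"
    using modcase[of A 9 _ B _ 9] by auto
  thus ?thesis by (simp add: A_def B_def)
qed


lemma pow2_odd_decomp: "(t::nat) > 0 \<Longrightarrow> \<exists>s r. odd r \<and> t = 2^s * r"
proof (induction t rule: less_induct)
  case (less t)
  show ?case
  proof (cases "odd t")
    case True
    then show ?thesis by (intro exI[of _ 0] exI[of _ t]) simp
  next
    case False
    then obtain t' where t': "t = 2*t'" by (auto elim: evenE)
    with less.prems have "t' < t" "t' > 0" by auto
    from less.IH[OF this] obtain s r where "odd r" "t' = 2^s*r" by blast
    then show ?thesis using t' by (intro exI[of _ "Suc s"] exI[of _ r]) simp
  qed
qed

lemma Gc_simps[simp]: "gre (G c 0 * w) = c * gre w" "gim (G c 0 * w) = c * gim w"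
  by simp_all

lemma sq_step0: "(1 + G (2*d) 0 * e) * (1 + G (2*d) 0 * e) = 1 + G (2*(2*d)) 0 * (e + G d 0 * (e * e))"
  by (simp only: gi_eq_iff gre_simps gim_simps gi.sel) (simp add: algebra_simps)
lemma sq_step: "(1 + G (2*d) 0 * e)^2 = 1 + G (2*(2*d)) 0 * (e + G d 0 * e^2)"
  using sq_step0 by (simp only: power2_eq_square)

lemma pow2s: "\<exists>e. al^(4*2^s) = 1 + G (2^(4+s)) 0 * e \<and> even (gre e) \<and> odd (gim e)"
proof (induction s)
  case 0
  have "al^(4*2^0) = 1 + G (2^(4+0)) 0 * G 10 15" by (simp add: alp4 gi_eq_iff)
  then show ?case by (intro exI[of _ "G 10 15"]) simp
next
  case (Suc s)
  then obtain e where e: "al^(4*2^s) = 1 + G (2^(4+s)) 0 * e" "even (gre e)" "odd (gim e)" by blast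
  have h: "(2::int)^(4+s) = 2*2^(3+s)" by (simp add: power_add)
  have h2: "2*(2*2^(3+s)) = (2::int)^(4 + Suc s)" by (simp add: power_add)
  have "al^(4*2^Suc s) = (al^(4*2^s))^2"
    by (simp add: power_mult[symmetric] mult_ac)
  also have "\<dots> = (1 + G (2*2^(3+s)) 0 * e)^2"
    using e(1) h by (simp only:)
  also have "\<dots> = 1 + G (2*(2*2^(3+s))) 0 * (e + G (2^(3+s)) 0 * e^2)" by (rule sq_step)
  also have "\<dots> = 1 + G (2^(4 + Suc s)) 0 * (e + G (2^(3+s)) 0 * e^2)" by (simp only: h2)
  finally show ?case using e(2,3) by (intro exI[of _ "e + G (2^(3+s)) 0 * e^2"]) simp
qed

lemma oddpow:
  assumes "even c" "even (gre e)" "odd (gim e)"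
  shows "\<exists>z. (1 + G c 0 * e)^n = 1 + G c 0 * z \<and> even (gre z) \<and> (odd (gim z) \<longleftrightarrow> odd n)"
proof (induction n)
  case 0
  then show ?case by (intro exI[of _ 0]) simp
next
  case (Suc n)
  then obtain z where z: "(1 + G c 0 * e)^n = 1 + G c 0 * z" "even (gre z)" "odd (gim z) \<longleftrightarrow> odd n"
    by blast
  have "(1 + G c 0 * e)^Suc n = (1 + G c 0 * e) * (1 + G c 0 * z)" using z(1) by simp
  also have "\<dots> = 1 + G c 0 * (e + z + G c 0 * (e * z))" by (simp add: algebra_simps)
  finally show ?case using z(2,3) assms
    by (intro exI[of _ "e + z + G c 0 * (e * z)"]) auto
qed

lemma twoA:
  assumes "n \<ge> 4"
  shows "\<exists>s z. al^n = al^(n mod 4) * (1 + G (2^(4+s)) 0 * z) \<and> even (gre z) \<and> odd (gim z)"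
proof -
  have "n div 4 > 0" using assms by simp
  then obtain s r where sr: "odd r" "n div 4 = 2^s * r" using pow2_odd_decomp by blast
  obtain e where e: "al^(4*2^s) = 1 + G (2^(4+s)) 0 * e" "even (gre e)" "odd (gim e)"
    using pow2s by blast
  obtain z where z: "(1 + G (2^(4+s)) 0 * e)^r = 1 + G (2^(4+s)) 0 * z" "even (gre z)" "odd (gim z)"
    using oddpow[of "2^(4+s)" e r] e(2,3) sr(1) by auto
  have "al^n = al^(n mod 4) * al^(4 * (n div 4))"
    by (metis add.commute mod_div_mult_eq mult.commute power_add)
  also have "al^(4 * (n div 4)) = (al^(4*2^s))^r" by (simp add: sr(2) power_mult mult.assoc)
  finally have "al^n = al^(n mod 4) * (1 + G (2^(4+s)) 0 * z)" using e(1) z(1) by simp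
  thus ?thesis using z(2,3) by blast
qed

lemma F4a:
  assumes "n mod 4 = 1" "n \<ge> 4"
  shows "(gre (al^n) + gim (al^n)) mod 16 = 5 \<and> gre (al^n) + gim (al^n) \<noteq> 5 \<and>
         (gre (al^n) - gim (al^n)) mod 16 = 3 \<and> gre (al^n) - gim (al^n) \<noteq> 3"
proof -
  obtain s z where sz: "al^n = al^(n mod 4) * (1 + G (2^(4+s)) 0 * z)" "even (gre z)" "odd (gim z)"
    using twoA[OF assms(2)] by blast
  define g where "g = gre z"
  define h where "h = gim z"
  define c :: int where "c = 2^s"
  have c4: "(2::int)^(4+s) = 16 * c" by (simp add: c_def power_add)
  have sz1: "al^n = al^(n mod 4) * (1 + G (16 * c) 0 * z)" using sz(1) by (simp only: c4)
  have A: "gre (al^n) = 4 + 16 * c * (4*g - h)" using sz1 assms(1)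
    by (simp add: g_def h_def algebra_simps)
  have B: "gim (al^n) = 1 + 16 * c * (4*h + g)" using sz1 assms(1)
    by (simp add: g_def h_def algebra_simps)
  have c0: "c \<noteq> 0" by (simp add: c_def)
  have o1: "odd (5*g + 3*h)" "odd (3*g - 5*h)" using sz(2,3) by (simp_all add: g_def h_def)
  hence n1: "5*g + 3*h \<noteq> 0" "3*g - 5*h \<noteq> 0" by (metis dvd_0_right)+
  have "gre (al^n) + gim (al^n) = 5 + 16 * (c * (5*g + 3*h))" unfolding A B by (simp add: algebra_simps)
  moreover have "gre (al^n) - gim (al^n) = 3 + 16 * (c * (3*g - 5*h))" unfolding A B by (simp add: algebra_simps)
  ultimately show ?thesis using c0 n1 by simp
qed

lemma F4b:
  assumes "n mod 4 = 3" "n \<ge> 4"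
  shows "(gre (al^n) + gim (al^n)) mod 16 = 3 \<and>
         (gre (al^n) - gim (al^n)) mod 16 = 5 \<and> gre (al^n) - gim (al^n) \<noteq> 5"
proof -
  obtain s z where sz: "al^n = al^(n mod 4) * (1 + G (2^(4+s)) 0 * z)" "even (gre z)" "odd (gim z)"
    using twoA[OF assms(2)] by blast
  define g where "g = gre z"
  define h where "h = gim z"
  define c :: int where "c = 2^s"
  have c4: "(2::int)^(4+s) = 16 * c" by (simp add: c_def power_add)
  have sz1: "al^n = al^(n mod 4) * (1 + G (16 * c) 0 * z)" using sz(1) by (simp only: c4)
  have A: "gre (al^n) = 52 + 16 * c * (52*g - 47*h)" using sz1 assms(1)
    by (simp add: alp3 g_def h_def algebra_simps)
  have B: "gim (al^n) = 47 + 16 * c * (52*h + 47*g)" using sz1 assms(1)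
    by (simp add: alp3 g_def h_def algebra_simps)
  have c0: "c \<noteq> 0" by (simp add: c_def)
  have o1: "odd (5*g - 99*h)" using sz(2,3) by (simp_all add: g_def h_def)
  hence n1: "5*g - 99*h \<noteq> 0" by (metis dvd_0_right)
  have "gre (al^n) + gim (al^n) = 3 + 16 * (6 + c * (99*g + 5*h))" unfolding A B by (simp add: algebra_simps)
  moreover have "gre (al^n) - gim (al^n) = 5 + 16 * (c * (5*g - 99*h))" unfolding A B by (simp add: algebra_simps)
  ultimately show ?thesis using c0 n1 by simp
qed


lemma lemK:
  fixes x y :: int
  shows "odd n \<Longrightarrow> x > 0 \<Longrightarrow> y > 0 \<Longrightarrow> x^2 + y^2 = 2*17^n \<Longrightarrow>
    (3 dvd x \<and> 5 dvd y) \<or> (5 dvd x \<and> 3 dvd y)"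
proof (induction n arbitrary: x y rule: less_induct)
  case (less n)
  show ?case
  proof (cases "17 dvd x \<and> 17 dvd y")
    case True
    then obtain x' y' where xy: "x = 17*x'" "y = 17*y'" by (auto elim!: dvdE)
    have pos: "x' > 0" "y' > 0" using less.prems(2,3) xy by simp_all
    have eq: "289 * (x'^2 + y'^2) = 2*17^n" using less.prems(4) xy
      by (simp add: power_mult_distrib algebra_simps)
    have "n \<ge> 2"
    proof (rule ccontr)
      assume "\<not> n \<ge> 2"
      hence "n = 1" using less.prems(1) by presburger
      hence "289 * (x'^2 + y'^2) = 34" using eq by simp
      moreover have "x'^2 \<ge> 1" using pos(1)
        by (metis one_le_power zero_less_iff_neq_zero int_one_le_iff_zero_less)
      moreover have "y'^2 \<ge> 0" by simp
      ultimately have "289 * x'^2 + 289 * y'^2 = 34" "x'^2 \<ge> 1" "y'^2 \<ge> 0"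
        by (simp_all add: algebra_simps)
      thus False by linarith
    qed
    define k where "k = n - 2"
    have nk: "n = k + 2" using \<open>n \<ge> 2\<close> by (simp add: k_def)
    have "289 * (x'^2 + y'^2) = 289 * (2 * 17^k)" using eq by (simp add: nk power_add)
    hence eq2: "x'^2 + y'^2 = 2 * 17^k" by simp
    have "k < n" "odd k" using nk less.prems(1) by auto
    from less.IH[OF this pos eq2] show ?thesis using xy by auto
  next
    case False
    from corC[OF less.prems(2,3,4) False] mod15[OF less.prems(1)] show ?thesis
      by auto
  qed
qed

lemma prime_dvd_eq: "prime (q::nat) \<Longrightarrow> d dvd q \<Longrightarrow> d \<noteq> 1 \<Longrightarrow> d = q"
  unfolding prime_nat_iff by blast

lemma int_pow_dvd: assumes "prime (d::nat)" "int d dvd int q ^ m" shows "d dvd q"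
proof -
  have "prime (int d)" using assms(1) by simp
  hence "int d dvd int q" using assms(2) prime_dvd_power by blast
  thus ?thesis by simp
qed

lemma pow5: "(5::int)^m \<noteq> 1525"
proof
  assume h: "(5::int)^m = 1525"
  show False
  proof (cases "m \<ge> 5")
    case True
    hence "(5::int)^5 \<le> 5^m" by (rule power_increasing) simp
    thus False using h by simp
  next
    case False
    hence "m = 0 \<or> m = 1 \<or> m = 2 \<or> m = 3 \<or> m = 4" by auto
    thus False using h by auto
  qed
qed

lemma pow3: "(3::int)^m \<noteq> 99"
proof
  assume h: "(3::int)^m = 99"
  show False
  proof (cases "m \<ge> 5")
    case True
    hence "(3::int)^5 \<le> 3^m" by (rule power_increasing) simp
    thus False using h by simp
  next
    case False
    hence "m = 0 \<or> m = 1 \<or> m = 2 \<or> m = 3 \<or> m = 4" by auto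
    thus False using h by auto
  qed
qed

theorem theorem3:
  fixes m p q x :: nat
  assumes "m > 0" and "x > 0"
    and "prime p" and "odd p" and "prime q" and "odd q"
    and "x^2 + q^(2*m) = 2 * 17^p"
  shows "m = 1 \<and> p = 3 \<and> q = 5 \<and> x = 99"
proof -
  define X where "X = int x"
  define Y where "Y = int q ^ m"
  have "q^(2*m) = (q^m)^2" by (simp add: power_mult[symmetric] mult.commute)
  hence "int (x^2 + (q^m)^2) = int (2 * 17^p)" using assms(7) by simp
  hence eq: "X^2 + Y^2 = 2 * 17^p" by (simp add: X_def Y_def)
  have Xp: "X > 0" using assms(2) by (simp add: X_def)
  have q0: "q > 0" using assms(5) prime_gt_0_nat by blast
  have Yp: "Y > 0" using q0 by (simp add: Y_def)
  have K: "(3 dvd X \<and> 5 dvd Y) \<or> (5 dvd X \<and> 3 dvd Y)"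
    using lemK[OF assms(4) Xp Yp eq] .
  have q35: "q = 3 \<or> q = 5"
  proof -
    have "int 3 dvd Y \<or> int 5 dvd Y" using K by auto
    hence "3 dvd q \<or> 5 dvd q" unfolding Y_def
      using int_pow_dvd[of 3 q m] int_pow_dvd[of 5 q m] by auto
    thus ?thesis using prime_dvd_eq[OF assms(5), of 3] prime_dvd_eq[OF assms(5), of 5] by auto
  qed
  have no17: "\<not> (17 dvd X \<and> 17 dvd Y)"
  proof
    assume "17 dvd X \<and> 17 dvd Y"
    hence "int 17 dvd int q ^ m" by (simp add: Y_def)
    hence "17 dvd q" using int_pow_dvd[of 17 q m] by simp
    thus False using q35 by auto
  qed
  define A where "A = gre (al^p)"
  define B where "B = gim (al^p)"
  have C: "(X = \<bar>A - B\<bar> \<and> Y = \<bar>A + B\<bar>) \<or> (X = \<bar>A + B\<bar> \<and> Y = \<bar>A - B\<bar>)"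
    using corC[OF Xp Yp eq no17] by (simp add: A_def B_def)
  hence YSD: "Y = \<bar>A + B\<bar> \<or> Y = \<bar>A - B\<bar>" by blast
  have p2: "p \<ge> 2" using assms(3) prime_ge_2_nat by blast
  have m1: "m = 1"
  proof (cases "q = 5")
    case q5: True
    show ?thesis
    proof (cases "p = 5")
      case True
      hence "A = 404" "B = 1121" by (simp_all add: A_def B_def alp5)
      hence "Y = 1525 \<or> Y = 717" using YSD by simp
      moreover have "Y = 5^m" using q5 by (simp add: Y_def)
      moreover have "(5::int) dvd 5^m" using assms(1) by (simp add: dvd_power)
      ultimately show ?thesis using pow5[of m] by auto
    next
      case False
      have "\<not> 5 dvd p" using prime_dvd_eq[OF assms(3), of 5] False by auto
      from mod25[OF assms(4) this] have "\<not> 25 dvd Y" using YSD by (auto simp: A_def B_def)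
      moreover have "m \<ge> 2 \<Longrightarrow> (25::int) dvd 5^m"
        using le_imp_power_dvd[of 2 m "5::int"] by simp
      moreover have "Y = 5^m" using q5 by (simp add: Y_def)
      ultimately show ?thesis using assms(1) by fastforce
    qed
  next
    case False
    hence q3: "q = 3" using q35 by simp
    show ?thesis
    proof (cases "p = 3")
      case True
      hence "A = 52" "B = 47" by (simp_all add: A_def B_def alp3)
      hence "Y = 99 \<or> Y = 5" using YSD by simp
      moreover have "Y = 3^m" using q3 by (simp add: Y_def)
      moreover have "(3::int) dvd 3^m" using assms(1) by (simp add: dvd_power)
      ultimately show ?thesis using pow3[of m] by auto
    next
      case False
      have "\<not> 3 dvd p" using prime_dvd_eq[OF assms(3), of 3] False by auto
      from mod9[OF assms(4) this] have "\<not> 9 dvd Y" using YSD by (auto simp: A_def B_def)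
      moreover have "m \<ge> 2 \<Longrightarrow> (9::int) dvd 3^m"
        using le_imp_power_dvd[of 2 m "3::int"] by simp
      moreover have "Y = 3^m" using q3 by (simp add: Y_def)
      ultimately show ?thesis using assms(1) by fastforce
    qed
  qed
  have Yq: "Y = int q" using m1 by (simp add: Y_def)
  have Y35: "Y = 3 \<or> Y = 5" using q35 Yq by auto
  show ?thesis
  proof (cases "p = 3")
    case True
    hence eq3: "X^2 + Y^2 = 9826" using eq by simp
    show ?thesis
    proof (cases "q = 5")
      case True
      hence "X^2 = 99^2" using eq3 Yq by simp
      hence "X = 99" using Xp power2_eq_iff_nonneg[of X 99] by simp
      thus ?thesis using True m1 \<open>p = 3\<close> by (simp add: X_def)
    next
      case False
      hence "X^2 = 9817" using eq3 Yq q35 by simp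
      show ?thesis
      proof (cases "X \<le> 99")
        case True
        hence "X^2 \<le> 99^2" using Xp by (intro power_mono) auto
        thus ?thesis using \<open>X^2 = 9817\<close> by simp
      next
        case False
        hence "100^2 \<le> X^2" by (intro power_mono) auto
        thus ?thesis using \<open>X^2 = 9817\<close> by simp
      qed
    qed
  next
    case False
    have "p \<noteq> 2" using assms(4) by auto
    hence p5: "p \<ge> 4" using p2 False by auto
    have "p mod 4 = 1 \<or> p mod 4 = 3" using assms(4) by presburger
    thus ?thesis
    proof
      assume h: "p mod 4 = 1"
      from F4a[OF h p5] have f: "(A + B) mod 16 = 5" "A + B \<noteq> 5" "(A - B) mod 16 = 3" "A - B \<noteq> 3"
        by (simp_all add: A_def B_def)
      have "A + B \<in> {3, -3, 5, -5} \<or> A - B \<in> {3, -3, 5, -5}" using YSD Y35 by auto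
      thus ?thesis using f by auto
    next
      assume h: "p mod 4 = 3"
      from F4b[OF h p5] mod5[OF h] have f: "(A + B) mod 16 = 3" "(A + B) mod 5 = 4"
        "(A - B) mod 16 = 5" "A - B \<noteq> 5"
        by (simp_all add: A_def B_def)
      have "A + B \<in> {3, -3, 5, -5} \<or> A - B \<in> {3, -3, 5, -5}" using YSD Y35 by auto
      thus ?thesis using f by auto
    qed
  qed
qed
end
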